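(* Let $z$ with $d(z,\mathcal{M})=O(\sigma)$, projection $z^*$, and $\Delta=\|z-z^*\|_2$; choose Cartesian coordinates with $z^*$ the origin, $T_{z^*}\mathcal{M}$ spanned by the first $d$ coordinate directions and $z=\Delta e_{d+1}$. Let $r_0=C\sigma$, $R=r_0+C\sigma\sqrt{\log(1/\sigma)}$, $\mathbb{D}=T_{z^*}\mathcal{M}\cap\mathcal{B}_D(z,R)$, $\nu_{\mathbb{D}}(y)=\int_{\mathbb{D}}\phi_\sigma(y-x)\,\mathrm{vol}(\mathcal{M})^{-1}dx$, and let $\tilde\nu_{\mathbb{D}}$ be its normalization to a probability density on $\mathcal{B}_D(z,r_0)$. Let $\mu^{\mathbb{B}}_{z,\mathbb{D}}=(\mu^{(1)}_{\mathbb{D}},\dots,\mu^{(D)}_{\mathbb{D}})$ be the expectation of $Y\sim\tilde\nu_{\mathbb{D}}$. Then $|\Delta-\mu^{(d+1)}_{\mathbb{D}}|\ge c\sigma$ and $\mu^{(i)}_{\mathbb{D}}=0$ for all $i\ne d+1$.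
   Context: Model: $\mathcal{M}\subset\mathbb{R}^D$ is a compact, twice-differentiable, $d$-dimensional embedded submanifold with $d$-dimensional Hausdorff volume at most $V$ and reach at least $\tau>0$; $\phi_\sigma$ is the $N(0,\sigma^2I_D)$ density. $z^*=\arg\min_{x\in\mathcal{M}}\|x-z\|_2$; $e_{d+1}$ is the $(d+1)$-th standard basis vector. $\sigma$ is sufficiently small; $c<1$, $C>1$ are constants independent of $\sigma$.
   Formalization: The hypothesis $d(z,\mathcal{M})=O(\sigma)$ becomes $a\sigma \le \Delta \le A\sigma$ for fixed constants $0 < a \le A$, with c and the smallness threshold for sigma allowed to depend on a, A and C. Apart from conventions, each condition added here is assumed in the paper as well or is needed for the statement above to hold. *)

theory Defs
  imports "HOL-Analysis.Analysis"
begin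

text \<open>Coordinates: the ambient space R^D is real^'n with D = CARD('n).
  After the change of coordinates of the paper, z* is the origin, the tangent
  space T_{z*}M is spanned by the coordinate directions indexed by a set T
  (card T = d), and z = Delta * e_k with k not in T (k plays the role of d+1).\<close>

definition gauss :: "real \<Rightarrow> real^'n \<Rightarrow> real" where
  "gauss \<sigma> v = (2 * pi * \<sigma> ^ 2) powr (- real CARD('n) / 2) * exp (- ((norm v) ^ 2) / (2 * \<sigma> ^ 2))"

definition tangent_emb :: "'n set \<Rightarrow> ('n \<Rightarrow> real) \<Rightarrow> real^'n" where
  "tangent_emb T u = (\<chi> i. if i \<in> T then u i else 0)"

text \<open>nu_D(y) = int_{T cap B(z,R)} phi_sigma(y - x) vol(M)^{-1} dx, with dx the
  d-dimensional Lebesgue measure on the plane (pushed forward from PiM T lborel).\<close>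
definition nu_disc :: "'n set \<Rightarrow> real \<Rightarrow> real^'n \<Rightarrow> real \<Rightarrow> real \<Rightarrow> real^'n \<Rightarrow> real" where
  "nu_disc T \<sigma> z R V y =
     (\<integral>u. indicator (ball z R) (tangent_emb T u) * gauss \<sigma> (y - tangent_emb T u)
        \<partial>(PiM T (\<lambda>_. lborel))) / V"

definition nu_tilde :: "'n set \<Rightarrow> real \<Rightarrow> real^'n \<Rightarrow> real \<Rightarrow> real \<Rightarrow> real \<Rightarrow> real^'n \<Rightarrow> real" where
  "nu_tilde T \<sigma> z R V r0 y =
     indicator (ball z r0) y * nu_disc T \<sigma> z R V y /
       (\<integral>w. indicator (ball z r0) w * nu_disc T \<sigma> z R V w \<partial>lborel)"

definition mean_disc :: "'n set \<Rightarrow> real \<Rightarrow> real^'n \<Rightarrow> real \<Rightarrow> real \<Rightarrow> real \<Rightarrow> real^'n" where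
  "mean_disc T \<sigma> z R V r0 = (\<integral>y. nu_tilde T \<sigma> z R V r0 y *\<^sub>R y \<partial>lborel)"

end

theory Submission
  imports Defs "HOL-Probability.Probability"
begin


lemma fps_lborel: "finite T \<Longrightarrow> finite_product_sigma_finite (\<lambda>_::'n. lborel::real measure) T"
  by unfold_locales (auto intro: lborel.sigma_finite_measure_axioms)

lemma emb_measurable[measurable]:
  "tangent_emb T \<in> borel_measurable (PiM T (\<lambda>_. lborel))"
proof -
  have "(\<lambda>u. tangent_emb T u \<bullet> b) \<in> borel_measurable (PiM T (\<lambda>_. lborel))" if "b \<in> Basis" for b
  proof -
    from that obtain i where b: "b = axis i 1" by (auto simp: Basis_vec_def)
    have e: "(\<lambda>u. tangent_emb T u \<bullet> b) = (\<lambda>u. if i \<in> T then u i else 0)"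
      by (auto simp: b tangent_emb_def cart_eq_inner_axis[symmetric])
    show ?thesis unfolding e by (cases "i \<in> T") auto
  qed
  then show ?thesis by (subst borel_measurable_euclidean_space) auto
qed

lemma gauss_measurable[measurable]: "gauss \<sigma> \<in> borel_measurable borel"
  unfolding gauss_def by measurable

lemma norm_sq_cart: "(norm (x::real^'n))^2 = (\<Sum>i\<in>UNIV. (x$i)^2)"
  unfolding power2_norm_eq_inner inner_vec_def by (simp add: power2_eq_square)

lemma norm_emb_sq:
  "(norm (y - tangent_emb T u))^2 = (\<Sum>i\<in>T. (y$i - u i)^2) + (\<Sum>i\<in>-T. (y$i)^2)"
proof -
  have "(norm (y - tangent_emb T u))^2 = (\<Sum>i\<in>T \<union> -T. ((y - tangent_emb T u)$i)^2)"
    by (simp add: norm_sq_cart)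
  also have "\<dots> = (\<Sum>i\<in>T. ((y - tangent_emb T u)$i)^2) + (\<Sum>i\<in>-T. ((y - tangent_emb T u)$i)^2)"
    by (rule sum.union_disjoint) auto
  also have "\<dots> = (\<Sum>i\<in>T. (y$i - u i)^2) + (\<Sum>i\<in>-T. (y$i)^2)"
    by (auto simp: tangent_emb_def intro!: sum.cong)
  finally show ?thesis .
qed



definition g1 :: "real \<Rightarrow> real \<Rightarrow> real \<Rightarrow> real" where
  "g1 \<sigma> c x = exp (- ((x - c)^2) / (2 * \<sigma>^2))"

lemma g1_nd: "0 < \<sigma> \<Longrightarrow> g1 \<sigma> c x = sqrt (2 * pi * \<sigma>^2) * normal_density c \<sigma> x"
  by (simp add: g1_def normal_density_def)

lemma g1_nd': "0 < \<sigma> \<Longrightarrow> g1 \<sigma> c = (\<lambda>x. sqrt (2 * pi * \<sigma>^2) * normal_density c \<sigma> x)"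
  using g1_nd by auto

lemma g1_integrable: "0 < \<sigma> \<Longrightarrow> integrable lborel (g1 \<sigma> c)"
  by (subst g1_nd') auto

lemma g1_integral: "0 < \<sigma> \<Longrightarrow> (\<integral>x. g1 \<sigma> c x \<partial>lborel) = sqrt (2 * pi * \<sigma>^2)"
  by (subst g1_nd') auto

definition Kc :: "real \<Rightarrow> 'n::finite itself \<Rightarrow> real" where
  "Kc \<sigma> _ = (2 * pi * \<sigma> ^ 2) powr (- real CARD('n) / 2)"

lemma gauss_Kc: "gauss \<sigma> (v::real^'n::finite) = Kc \<sigma> TYPE('n) * exp (- ((norm v) ^ 2) / (2 * \<sigma> ^ 2))"
  by (simp add: gauss_def Kc_def)

lemma Kc_pos: "0 < \<sigma> \<Longrightarrow> 0 < Kc \<sigma> TYPE('n::finite)"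
  by (simp add: Kc_def)

definition FF :: "'n::finite set \<Rightarrow> real \<Rightarrow> real^'n \<Rightarrow> real \<Rightarrow> real^'n \<Rightarrow> ('n \<Rightarrow> real) \<Rightarrow> real" where
  "FF T \<sigma> z R y u = indicator (ball z R) (tangent_emb T u) * gauss \<sigma> (y - tangent_emb T u)"

lemma nu_disc_FF: "nu_disc T \<sigma> z R V y = (\<integral>u. FF T \<sigma> z R y u \<partial>PiM T (\<lambda>_. lborel)) / V"
  by (simp add: nu_disc_def FF_def)

lemma FF_measurable[measurable]:
  fixes T :: "'n::finite set"
  shows
  "(\<lambda>(y, u). FF T \<sigma> z R y u) \<in> borel_measurable (lborel \<Otimes>\<^sub>M PiM T (\<lambda>_. lborel))"
proof -
  have m1: "(\<lambda>x. tangent_emb T (snd x)) \<in> borel_measurable (lborel \<Otimes>\<^sub>M PiM T (\<lambda>_. lborel))"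
    by (rule measurable_compose[OF measurable_snd emb_measurable])
  have m2: "(\<lambda>x::(real^'n) \<times> ('n \<Rightarrow> real). fst x) \<in> borel_measurable (lborel \<Otimes>\<^sub>M PiM T (\<lambda>_. lborel))"
    by (rule measurable_compose[OF measurable_fst]) simp
  have m3: "(\<lambda>x. fst x - tangent_emb T (snd x)) \<in> borel_measurable (lborel \<Otimes>\<^sub>M PiM T (\<lambda>_. lborel))"
    by (intro borel_measurable_diff m1 m2)
  have m4: "(\<lambda>x. gauss \<sigma> (fst x - tangent_emb T (snd x))) \<in> borel_measurable (lborel \<Otimes>\<^sub>M PiM T (\<lambda>_. lborel))"
    by (rule measurable_compose[OF m3 gauss_measurable])
  have m5: "(\<lambda>x. indicator (ball z R) (tangent_emb T (snd x)) :: real) \<in> borel_measurable (lborel \<Otimes>\<^sub>M PiM T (\<lambda>_. lborel))"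
    by (rule measurable_compose[OF m1 borel_measurable_indicator]) simp
  show ?thesis unfolding FF_def split_beta by (intro borel_measurable_times m4 m5)
qed

lemma FF_nonneg: "0 < \<sigma> \<Longrightarrow> 0 \<le> FF T \<sigma> z R y u"
  by (auto simp: FF_def gauss_def)

lemma FF_upper:
  fixes T :: "'n::finite set"
  assumes "0 < \<sigma>"
  shows "FF T \<sigma> z R y u \<le> Kc \<sigma> TYPE('n::finite) * (\<Prod>i\<in>T. g1 \<sigma> (y$i) (u i))"
proof -
  have "FF T \<sigma> z R y u \<le> gauss \<sigma> (y - tangent_emb T u)"
    by (auto simp: FF_def gauss_def indicator_def)
  also have "\<dots> = Kc \<sigma> TYPE('n) * exp (- ((\<Sum>i\<in>T. (u i - y$i)^2) + (\<Sum>i\<in>-T. (y$i)^2)) / (2 * \<sigma> ^ 2))"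
    by (simp add: gauss_Kc norm_emb_sq power2_commute)
  also have "\<dots> \<le> Kc \<sigma> TYPE('n) * exp (- (\<Sum>i\<in>T. (u i - y$i)^2) / (2 * \<sigma> ^ 2))"
    using assms Kc_pos[OF assms, where 'n='n]
    by (intro mult_left_mono) (auto simp: divide_simps intro!: sum_nonneg)
  also have "exp (- (\<Sum>i\<in>T. (u i - y$i)^2) / (2 * \<sigma> ^ 2)) = exp (\<Sum>i\<in>T. (- ((u i - y$i)^2)) / (2 * \<sigma> ^ 2))"
    by (simp add: sum_divide_distrib sum_negf)
  also have "\<dots> = (\<Prod>i\<in>T. g1 \<sigma> (y$i) (u i))"
    by (simp add: exp_sum g1_def)
  finally show ?thesis .
qed

lemma prod_g1_integrable:
  assumes "0 < \<sigma>"
  shows "integrable (PiM T (\<lambda>_. lborel)) (\<lambda>u. \<Prod>i\<in>(T::'n::finite set). g1 \<sigma> (y$i) (u i))"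
proof -
  interpret finite_product_sigma_finite "\<lambda>_. lborel::real measure" T by (rule fps_lborel) simp
  show ?thesis by (rule product_integrable_prod) (auto intro: g1_integrable[OF assms])
qed

lemma prod_g1_integral:
  assumes "0 < \<sigma>"
  shows "(\<integral>u. (\<Prod>i\<in>(T::'n::finite set). g1 \<sigma> (y$i) (u i)) \<partial>PiM T (\<lambda>_. lborel)) = sqrt (2 * pi * \<sigma>^2) ^ card T"
proof -
  interpret finite_product_sigma_finite "\<lambda>_. lborel::real measure" T by (rule fps_lborel) simp
  have "(\<integral>u. (\<Prod>i\<in>T. g1 \<sigma> (y$i) (u i)) \<partial>PiM T (\<lambda>_. lborel)) = (\<Prod>i\<in>T. \<integral>x. g1 \<sigma> (y$i) x \<partial>lborel)"
    by (rule product_integral_prod) (auto intro: g1_integrable[OF assms])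
  then show ?thesis by (simp add: g1_integral[OF assms])
qed

lemma FF_integrable:
  fixes T :: "'n::finite set"
  assumes "0 < \<sigma>"
  shows "integrable (PiM T (\<lambda>_. lborel)) (FF T \<sigma> z R y)"
proof (rule Bochner_Integration.integrable_bound[OF integrable_mult_right[OF prod_g1_integrable[OF assms]]])
  show "FF T \<sigma> z R y \<in> borel_measurable (PiM T (\<lambda>_. lborel))"
    using measurable_Pair2[OF FF_measurable, of y] by simp
  show "AE x in PiM T (\<lambda>_. lborel). norm (FF T \<sigma> z R y x) \<le> norm (Kc \<sigma> TYPE('n) * (\<Prod>i\<in>T. g1 \<sigma> (y$i) (x i)))"
  proof (rule AE_I2)
    fix x
    have "0 \<le> FF T \<sigma> z R y x" by (rule FF_nonneg[OF assms])
    moreover have "FF T \<sigma> z R y x \<le> Kc \<sigma> TYPE('n) * (\<Prod>i\<in>T. g1 \<sigma> (y$i) (x i))"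
      by (rule FF_upper[OF assms])
    ultimately show "norm (FF T \<sigma> z R y x) \<le> norm (Kc \<sigma> TYPE('n) * (\<Prod>i\<in>T. g1 \<sigma> (y$i) (x i)))"
      by simp
  qed
qed

lemma FF_integral_upper:
  fixes T :: "'n::finite set"
  assumes "0 < \<sigma>"
  shows "(\<integral>u. FF T \<sigma> z R y u \<partial>PiM T (\<lambda>_. lborel)) \<le> Kc \<sigma> TYPE('n::finite) * sqrt (2 * pi * \<sigma>^2) ^ card T"
proof -
  have "(\<integral>u. FF T \<sigma> z R y u \<partial>PiM T (\<lambda>_. lborel)) \<le> (\<integral>u. Kc \<sigma> TYPE('n) * (\<Prod>i\<in>T. g1 \<sigma> (y$i) (u i)) \<partial>PiM T (\<lambda>_. lborel))"
    by (intro integral_mono FF_integrable assms integrable_mult_right prod_g1_integrable FF_upper)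
  also have "\<dots> = Kc \<sigma> TYPE('n) * sqrt (2 * pi * \<sigma>^2) ^ card T"
    by (simp add: prod_g1_integral[OF assms])
  finally show ?thesis .
qed

lemma FF_integral_nonneg:
  assumes "0 < \<sigma>"
  shows "0 \<le> (\<integral>u. FF T \<sigma> z R y u \<partial>PiM T (\<lambda>_. lborel))"
  by (intro integral_nonneg_AE AE_I2 FF_nonneg assms)



lemma norm_emb_le:
  fixes T :: "'n::finite set"
  assumes "\<And>i. i \<in> T \<Longrightarrow> \<bar>u i\<bar> \<le> s" "0 \<le> s"
  shows "norm (tangent_emb T u) \<le> real CARD('n) * s"
proof -
  have "norm (tangent_emb T u) \<le> (\<Sum>i\<in>UNIV. \<bar>tangent_emb T u $ i\<bar>)" by (rule norm_le_l1_cart)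
  also have "\<dots> \<le> (\<Sum>i\<in>(UNIV::'n set). s)"
    using assms by (intro sum_mono) (auto simp: tangent_emb_def)
  finally show ?thesis by simp
qed

lemma PiM_box_emeasure:
  fixes T :: "'n::finite set"
  assumes "0 \<le> s"
  shows "emeasure (PiM T (\<lambda>_. lborel)) (PiE T (\<lambda>_. {-s..s})) = ennreal ((2 * s) ^ card T)"
proof -
  interpret finite_product_sigma_finite "\<lambda>_. lborel::real measure" T by (rule fps_lborel) simp
  have "emeasure (PiM T (\<lambda>_. lborel)) (PiE T (\<lambda>_. {-s..s})) = (\<Prod>i\<in>T. emeasure lborel {-s..s})"
    by (rule emeasure_PiM) auto
  also have "\<dots> = (\<Prod>i\<in>T. ennreal (2 * s))" using assms by simp
  also have "\<dots> = ennreal ((2 * s) ^ card T)" using assms by (simp add: ennreal_power)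
  finally show ?thesis .
qed

lemma PiM_box_measure:
  fixes T :: "'n::finite set"
  assumes "0 \<le> s"
  shows "measure (PiM T (\<lambda>_. lborel)) (PiE T (\<lambda>_. {-s..s})) = (2 * s) ^ card T"
  using PiM_box_emeasure[OF assms, of T] assms by (simp add: measure_def)

lemma FF_integral_lower:
  fixes T :: "'n::finite set"
  assumes s: "0 < \<sigma>" and y: "norm y \<le> \<rho>" and zR: "norm z + real CARD('n) * \<sigma> < R"
  shows "Kc \<sigma> TYPE('n) * exp (- ((\<rho> + real CARD('n) * \<sigma>)^2) / (2 * \<sigma>^2)) * (2 * \<sigma>) ^ card T
     \<le> (\<integral>u. FF T \<sigma> z R y u \<partial>PiM T (\<lambda>_. lborel))"
proof -
  interpret finite_product_sigma_finite "\<lambda>_. lborel::real measure" T by (rule fps_lborel) simp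
  define U where "U = PiE T (\<lambda>_. {-\<sigma>..\<sigma>})"
  define c where "c = Kc \<sigma> TYPE('n) * exp (- ((\<rho> + real CARD('n) * \<sigma>)^2) / (2 * \<sigma>^2))"
  have U: "U \<in> sets (PiM T (\<lambda>_. lborel))" unfolding U_def by (rule sets_PiM_I_finite) auto
  have Uf: "emeasure (PiM T (\<lambda>_. lborel)) U < \<infinity>"
    unfolding U_def using s by (subst PiM_box_emeasure) auto
  have mU: "measure (PiM T (\<lambda>_. lborel)) U = (2 * \<sigma>) ^ card T"
    unfolding U_def using s by (intro PiM_box_measure) auto
  have pw: "c * indicator U u \<le> FF T \<sigma> z R y u" for u
  proof (cases "u \<in> U")
    case True
    then have "\<And>i. i \<in> T \<Longrightarrow> \<bar>u i\<bar> \<le> \<sigma>" by (fastforce simp: U_def PiE_def Pi_def abs_le_iff)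
    then have ne: "norm (tangent_emb T u) \<le> real CARD('n) * \<sigma>" using s by (intro norm_emb_le) auto
    have "dist z (tangent_emb T u) \<le> norm z + norm (tangent_emb T u)"
      by (simp add: dist_norm norm_triangle_ineq4)
    then have inb: "tangent_emb T u \<in> ball z R" using ne zR by auto
    have n2: "norm (y - tangent_emb T u) \<le> \<rho> + real CARD('n) * \<sigma>"
      using norm_triangle_ineq4[of y "tangent_emb T u"] y ne by linarith
    have "(norm (y - tangent_emb T u))^2 \<le> (\<rho> + real CARD('n) * \<sigma>)^2"
      by (rule power_mono[OF n2 norm_ge_zero])
    then have "exp (- ((\<rho> + real CARD('n) * \<sigma>)^2) / (2 * \<sigma>^2)) \<le> exp (- ((norm (y - tangent_emb T u))^2) / (2 * \<sigma>^2))"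
      using s by (auto simp: divide_simps)
    then have "c \<le> gauss \<sigma> (y - tangent_emb T u)"
      unfolding c_def gauss_Kc using Kc_pos[OF s, where 'n='n] by (intro mult_left_mono) auto
    then show ?thesis using True inb by (simp add: FF_def)
  next
    case False
    then show ?thesis using FF_nonneg[OF s] by simp
  qed
  have "(\<integral>u. c * indicator U u \<partial>PiM T (\<lambda>_. lborel)) \<le> (\<integral>u. FF T \<sigma> z R y u \<partial>PiM T (\<lambda>_. lborel))"
    using U Uf by (intro integral_mono FF_integrable s pw integrable_mult_right integrable_real_indicator)
  moreover have "(\<integral>u. c * indicator U u \<partial>PiM T (\<lambda>_. lborel)) = c * (2 * \<sigma>) ^ card T"
  proof -
    have "U \<inter> space (PiM T (\<lambda>_. lborel)) = U" using sets.sets_into_space[OF U] by blast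
    then show ?thesis by (simp add: mU)
  qed
  ultimately have "c * (2 * \<sigma>) ^ card T \<le> (\<integral>u. FF T \<sigma> z R y u \<partial>PiM T (\<lambda>_. lborel))" by linarith
  then show ?thesis by (simp only: c_def)
qed



definition rf :: "'n::finite \<Rightarrow> real \<Rightarrow> real^'n \<Rightarrow> real^'n" where
  "rf i a y = (\<chi> j. if j = i then a - y$j else y$j)"

lemma rf_measurable[measurable]: "rf i a \<in> borel_measurable borel"
proof -
  have "rf i a = (\<lambda>y. y + (a - 2 * (y \<bullet> axis i 1)) *\<^sub>R axis i 1)"
    unfolding rf_def by (simp add: vec_eq_iff inner_axis fun_eq_iff) (auto simp: axis_def)
  then show ?thesis by (simp add: borel_measurable_continuous_onI continuous_intros)
qed

lemma lborel_rf: "distr lborel borel (rf i a) = (lborel :: (real^'n::finite) measure)"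
proof -
  define c where "c b = (if b = axis i (1::real) then -1 else (1::real))" for b :: "real^'n"
  define t where "t = a *\<^sub>R (axis i (1::real) :: real^'n)"
  have eq: "rf i a = (\<lambda>x. t + (\<Sum>j\<in>Basis. (c j * (x \<bullet> j)) *\<^sub>R j))"
  proof
    fix x :: "real^'n"
    have "(\<Sum>j\<in>Basis. (c j * (x \<bullet> j)) *\<^sub>R j) = (\<chi> j. c (axis j 1) * (x \<bullet> axis j 1))"
      by (rule vector_cart[symmetric])
    also have "\<dots> = (\<chi> j. (if j = i then -1 else 1) * x $ j)"
      by (simp add: c_def inner_axis axis_eq_axis)
    finally show "rf i a x = t + (\<Sum>j\<in>Basis. (c j * (x \<bullet> j)) *\<^sub>R j)"
      by (auto simp: rf_def t_def vec_eq_iff axis_def)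
  qed
  have L: "lborel = density (distr lborel borel (\<lambda>x. t + (\<Sum>j\<in>Basis. (c j * (x \<bullet> j)) *\<^sub>R j))) (\<lambda>_. ennreal (\<Prod>j\<in>Basis. \<bar>c j\<bar>))"
    by (rule lborel_affine_euclidean) (auto simp: c_def)
  have P: "(\<Prod>j\<in>Basis. \<bar>c j\<bar>) = 1"
    by (intro prod.neutral) (simp add: c_def)
  from L have "lborel = distr lborel borel (rf i a)"
    unfolding P eq[symmetric] ennreal_1 density_1 .
  then show ?thesis by (rule sym)
qed

lemma lborel_rf_integral:
  fixes f :: "real^'n::finite \<Rightarrow> 'b::{banach, second_countable_topology}"
  assumes "f \<in> borel_measurable borel"
  shows "(\<integral>y. f (rf i a y) \<partial>lborel) = (\<integral>y. f y \<partial>lborel)"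
proof -
  have "(\<integral>y. f y \<partial>lborel) = (\<integral>y. f y \<partial>distr lborel borel (rf i a))" by (simp add: lborel_rf)
  also have "\<dots> = (\<integral>y. f (rf i a y) \<partial>lborel)"
    by (rule integral_distr) (auto simp: assms)
  finally show ?thesis ..
qed


definition hu :: "'n \<Rightarrow> ('n \<Rightarrow> real) \<Rightarrow> ('n \<Rightarrow> real)" where
  "hu i u = u(i := - u i)"

lemma hu_measurable:
  fixes T :: "'n::finite set"
  assumes "i \<in> T"
  shows "hu i \<in> measurable (PiM T (\<lambda>_. lborel)) (PiM T (\<lambda>_. lborel))"
proof -
  have eq: "hu i = (\<lambda>u j. (if j = i then - u i else u j))"
    by (auto simp: hu_def fun_eq_iff)
  show ?thesis unfolding eq
  proof (rule measurable_PiM_single')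
    fix j assume j: "j \<in> T"
    have ci: "(\<lambda>u. u i) \<in> measurable (PiM T (\<lambda>_. lborel)) borel"
      using measurable_component_singleton[OF assms, of "\<lambda>_. lborel"] by simp
    have cj: "(\<lambda>u. u j) \<in> measurable (PiM T (\<lambda>_. lborel)) borel"
      using measurable_component_singleton[OF j, of "\<lambda>_. lborel"] by simp
    have "(\<lambda>u. - u i) \<in> measurable (PiM T (\<lambda>_. lborel)) borel"
      by (rule borel_measurable_uminus[OF ci])
    then have "(\<lambda>u. if j = i then - u i else u j) \<in> measurable (PiM T (\<lambda>_. lborel)) borel"
      using cj by (cases "j = i") simp_all
    then show "(\<lambda>u. if j = i then - u i else u j) \<in> measurable (PiM T (\<lambda>_. lborel)) lborel"
      by simp
  next
    show "(\<lambda>u j. if j = i then - u i else u j) \<in> space (PiM T (\<lambda>_. lborel)) \<rightarrow> (\<Pi>\<^sub>E j\<in>T. space lborel)"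
    proof
      fix u assume "u \<in> space (PiM T (\<lambda>_. lborel))"
      then have "u \<in> extensional T" by (simp add: space_PiM PiE_iff)
      then show "(\<lambda>j. if j = i then - u i else u j) \<in> (\<Pi>\<^sub>E j\<in>T. space lborel)"
        using assms unfolding PiE_iff extensional_def by simp
    qed
  qed
qed

lemma PiM_hu:
  fixes T :: "'n::finite set"
  assumes "i \<in> T"
  shows "distr (PiM T (\<lambda>_. lborel)) (PiM T (\<lambda>_. lborel)) (hu i) = PiM T (\<lambda>_. lborel)"
proof -
  interpret finite_product_sigma_finite "\<lambda>_. lborel::real measure" T by (rule fps_lborel) simp
  show ?thesis
  proof (rule PiM_eqI)
    show "finite T" by simp
    show "sets (distr (PiM T (\<lambda>_. lborel)) (PiM T (\<lambda>_. lborel)) (hu i)) = sets (PiM T (\<lambda>_. lborel))" by simp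
    fix A :: "'n \<Rightarrow> real set" assume A: "\<And>j. j \<in> T \<Longrightarrow> A j \<in> sets lborel"
    define A' where "A' j = (if j = i then uminus -` A j else A j)" for j
    have um': "uminus -` A i \<in> sets lborel"
    proof -
      have m: "(uminus :: real \<Rightarrow> real) \<in> measurable lborel lborel" by simp
      have "uminus -` A i \<inter> space lborel \<in> sets lborel"
        by (rule measurable_sets[OF m A[OF assms]])
      then show ?thesis by simp
    qed
    have A': "A' j \<in> sets lborel" if "j \<in> T" for j
      using A[OF that] um' by (auto simp: A'_def)
    have pre: "hu i -` Pi\<^sub>E T A \<inter> space (PiM T (\<lambda>_. lborel)) = Pi\<^sub>E T A'"
    proof (intro set_eqI iffI)
      fix u assume u: "u \<in> hu i -` Pi\<^sub>E T A \<inter> space (PiM T (\<lambda>_. lborel))"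
      then have e: "u \<in> extensional T" by (simp add: space_PiM PiE_iff)
      from u have h: "\<And>j. j \<in> T \<Longrightarrow> hu i u j \<in> A j" by (simp add: PiE_iff)
      have "u j \<in> A' j" if "j \<in> T" for j
        using h[OF that] by (cases "j = i") (auto simp: hu_def A'_def)
      then show "u \<in> Pi\<^sub>E T A'" using e by (simp add: PiE_iff)
    next
      fix u assume u: "u \<in> Pi\<^sub>E T A'"
      then have e: "u \<in> extensional T" by (simp add: PiE_iff)
      from u have h: "\<And>j. j \<in> T \<Longrightarrow> u j \<in> A' j" by (simp add: PiE_iff)
      have "hu i u j \<in> A j" if "j \<in> T" for j
        using h[OF that] by (cases "j = i") (auto simp: hu_def A'_def)
      moreover have "hu i u \<in> extensional T" using e assms by (auto simp: hu_def extensional_def)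
      ultimately show "u \<in> hu i -` Pi\<^sub>E T A \<inter> space (PiM T (\<lambda>_. lborel))"
        using e by (simp add: PiE_iff space_PiM)
    qed
    have m: "(uminus :: real \<Rightarrow> real) \<in> measurable lborel borel" by simp
    have Ab: "A i \<in> sets borel" using A[OF assms] by simp
    have um: "emeasure lborel (uminus -` A i) = emeasure lborel (A i)"
    proof -
      have "emeasure (distr lborel borel (uminus::real\<Rightarrow>real)) (A i) = emeasure lborel (uminus -` A i \<inter> space lborel)"
        by (rule emeasure_distr[OF m Ab])
      then show ?thesis unfolding lborel_distr_uminus by simp
    qed
    have "emeasure (distr (PiM T (\<lambda>_. lborel)) (PiM T (\<lambda>_. lborel)) (hu i)) (Pi\<^sub>E T A)
        = emeasure (PiM T (\<lambda>_. lborel)) (hu i -` Pi\<^sub>E T A \<inter> space (PiM T (\<lambda>_. lborel)))"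
      by (rule emeasure_distr[OF hu_measurable[OF assms] sets_PiM_I_finite]) (use A in auto)
    also have "\<dots> = (\<Prod>j\<in>T. emeasure lborel (A' j))"
      unfolding pre by (rule emeasure_PiM) (use A' in auto)
    also have "\<dots> = (\<Prod>j\<in>T. emeasure lborel (A j))"
    proof (rule prod.cong[OF refl])
      fix j assume "j \<in> T"
      show "emeasure lborel (A' j) = emeasure lborel (A j)"
      proof (cases "j = i")
        case True then show ?thesis using um by (simp add: A'_def)
      next
        case False then show ?thesis by (simp add: A'_def)
      qed
    qed
    finally show "emeasure (distr (PiM T (\<lambda>_. lborel)) (PiM T (\<lambda>_. lborel)) (hu i)) (Pi\<^sub>E T A) = (\<Prod>j\<in>T. emeasure lborel (A j))" .
  qed
qed



lemma rf0_diff: "rf i 0 v - rf i 0 w = rf i 0 (v - w)"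
  by (simp add: rf_def vec_eq_iff)

lemma norm_rf0: "norm (rf i 0 (v::real^'n::finite)) = norm v"
proof -
  have "(norm (rf i 0 v))^2 = (norm v)^2"
    unfolding norm_sq_cart by (intro sum.cong) (auto simp: rf_def)
  then show ?thesis by (simp add: power2_eq_iff_nonneg)
qed

lemma nu_measurable[measurable]:
  fixes T :: "'n::finite set"
  shows "(\<lambda>y. nu_disc T \<sigma> z R V y) \<in> borel_measurable borel"
proof -
  interpret finite_product_sigma_finite "\<lambda>_. lborel::real measure" T by (rule fps_lborel) simp
  have "(\<lambda>y. \<integral>u. FF T \<sigma> z R y u \<partial>PiM T (\<lambda>_. lborel)) \<in> borel_measurable lborel"
    by (rule borel_measurable_lebesgue_integral) (rule FF_measurable)
  then show ?thesis unfolding nu_disc_FF by simp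
qed

lemma nu_upper:
  fixes T :: "'n::finite set"
  assumes "0 < \<sigma>" "0 < V"
  shows "nu_disc T \<sigma> z R V y \<le> Kc \<sigma> TYPE('n) * sqrt (2 * pi * \<sigma>^2) ^ card T / V"
  unfolding nu_disc_FF using FF_integral_upper[OF assms(1), of T z R y] assms
  by (simp add: divide_right_mono)

lemma nu_nonneg:
  fixes T :: "'n::finite set"
  assumes "0 < \<sigma>" "0 < V"
  shows "0 \<le> nu_disc T \<sigma> z R V y"
  unfolding nu_disc_FF using FF_integral_nonneg[OF assms(1), of T z R y] assms by simp

lemma nu_lower:
  fixes T :: "'n::finite set"
  assumes "0 < \<sigma>" "0 < V" "norm y \<le> \<rho>" "norm z + real CARD('n) * \<sigma> < R"
  shows "Kc \<sigma> TYPE('n) * exp (- ((\<rho> + real CARD('n) * \<sigma>)^2) / (2 * \<sigma>^2)) * (2 * \<sigma>) ^ card T / V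
     \<le> nu_disc T \<sigma> z R V y"
  unfolding nu_disc_FF using FF_integral_lower[OF assms(1,3,4), of T] assms
  by (simp add: divide_right_mono)

lemma FF_shift:
  fixes T :: "'n::finite set"
  assumes "\<And>j. j \<in> T \<Longrightarrow> y' $ j = y $ j"
  shows "FF T \<sigma> z R y' u = FF T \<sigma> z R y u * exp (((\<Sum>j\<in>-T. (y$j)^2) - (\<Sum>j\<in>-T. (y'$j)^2)) / (2 * \<sigma>^2))"
proof -
  have ST: "(\<Sum>j\<in>T. (y'$j - u j)^2) = (\<Sum>j\<in>T. (y$j - u j)^2)"
    using assms by (intro sum.cong) auto
  have "gauss \<sigma> (y' - tangent_emb T u) = Kc \<sigma> TYPE('n) * exp (- ((\<Sum>j\<in>T. (y$j - u j)^2) + (\<Sum>j\<in>-T. (y'$j)^2)) / (2 * \<sigma> ^ 2))"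
    by (simp add: gauss_Kc norm_emb_sq ST)
  also have "\<dots> = Kc \<sigma> TYPE('n) * exp (- ((\<Sum>j\<in>T. (y$j - u j)^2) + (\<Sum>j\<in>-T. (y$j)^2)) / (2 * \<sigma> ^ 2))
      * exp (((\<Sum>j\<in>-T. (y$j)^2) - (\<Sum>j\<in>-T. (y'$j)^2)) / (2 * \<sigma>^2))"
    by (simp add: mult.assoc exp_add[symmetric] diff_divide_distrib add_divide_distrib)
  also have "\<dots> = gauss \<sigma> (y - tangent_emb T u) * exp (((\<Sum>j\<in>-T. (y$j)^2) - (\<Sum>j\<in>-T. (y'$j)^2)) / (2 * \<sigma>^2))"
    by (simp add: gauss_Kc norm_emb_sq)
  finally show ?thesis by (simp add: FF_def)
qed

lemma nu_shift:
  fixes T :: "'n::finite set"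
  assumes "\<And>j. j \<in> T \<Longrightarrow> y' $ j = y $ j"
  shows "nu_disc T \<sigma> z R V y' = nu_disc T \<sigma> z R V y * exp (((\<Sum>j\<in>-T. (y$j)^2) - (\<Sum>j\<in>-T. (y'$j)^2)) / (2 * \<sigma>^2))"
proof -
  have "FF T \<sigma> z R y' = (\<lambda>u. FF T \<sigma> z R y u * exp (((\<Sum>j\<in>-T. (y$j)^2) - (\<Sum>j\<in>-T. (y'$j)^2)) / (2 * \<sigma>^2)))"
    using FF_shift[OF assms] by auto
  then show ?thesis unfolding nu_disc_FF by simp
qed

lemma sum_rf_sq:
  fixes T :: "'n::finite set"
  assumes "i \<notin> T"
  shows "(\<Sum>j\<in>-T. (rf i a y $ j)^2) = (\<Sum>j\<in>-T. (y$j)^2) - (y$i)^2 + (a - y$i)^2"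
proof -
  have i: "i \<in> -T" using assms by simp
  have "(\<Sum>j\<in>-T. (rf i a y $ j)^2) = (rf i a y $ i)^2 + (\<Sum>j\<in>-T-{i}. (rf i a y $ j)^2)"
    using i by (subst sum.remove[of _ i]) auto
  also have "(\<Sum>j\<in>-T-{i}. (rf i a y $ j)^2) = (\<Sum>j\<in>-T-{i}. (y $ j)^2)"
    by (intro sum.cong) (auto simp: rf_def)
  also have "(\<Sum>j\<in>-T. (y $ j)^2) = (y $ i)^2 + (\<Sum>j\<in>-T-{i}. (y $ j)^2)"
    using i by (subst sum.remove[of _ i]) auto
  ultimately show ?thesis by (simp add: rf_def)
qed

lemma nu_rf_notin:
  fixes T :: "'n::finite set"
  assumes "i \<notin> T"
  shows "nu_disc T \<sigma> z R V (rf i a y) = nu_disc T \<sigma> z R V y * exp (((y$i)^2 - (a - y$i)^2) / (2 * \<sigma>^2))"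
proof -
  have "\<And>j. j \<in> T \<Longrightarrow> rf i a y $ j = y $ j" using assms by (auto simp: rf_def)
  from nu_shift[OF this] show ?thesis by (simp add: sum_rf_sq[OF assms])
qed

lemma nu_rf_in:
  fixes T :: "'n::finite set"
  assumes i: "i \<in> T" and z: "z $ i = 0" and s: "0 < \<sigma>"
  shows "nu_disc T \<sigma> z R V (rf i 0 y) = nu_disc T \<sigma> z R V y"
proof -
  have embh: "tangent_emb T (hu i u) = rf i 0 (tangent_emb T u)" for u
    using i by (auto simp: tangent_emb_def rf_def hu_def vec_eq_iff)
  have zr: "rf i 0 z = z" using z by (auto simp: rf_def vec_eq_iff)
  have pw: "FF T \<sigma> z R (rf i 0 y) u = FF T \<sigma> z R y (hu i u)" for u
  proof -
    have "rf i 0 y - tangent_emb T u = rf i 0 (y - tangent_emb T (hu i u))"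
      using i by (auto simp: tangent_emb_def rf_def hu_def vec_eq_iff)
    then have g: "gauss \<sigma> (rf i 0 y - tangent_emb T u) = gauss \<sigma> (y - tangent_emb T (hu i u))"
      by (simp add: gauss_def norm_rf0)
    have "dist z (tangent_emb T (hu i u)) = dist z (tangent_emb T u)"
      unfolding embh dist_norm
      by (metis zr rf0_diff norm_rf0)
    then have "indicator (ball z R) (tangent_emb T (hu i u)) = (indicator (ball z R) (tangent_emb T u) :: real)"
      by (simp add: indicator_def)
    then show ?thesis using g by (simp add: FF_def)
  qed
  have m: "FF T \<sigma> z R y \<in> borel_measurable (PiM T (\<lambda>_. lborel))"
    using measurable_Pair2[OF FF_measurable, of y] by simp
  have "(\<integral>u. FF T \<sigma> z R (rf i 0 y) u \<partial>PiM T (\<lambda>_. lborel)) = (\<integral>u. FF T \<sigma> z R y (hu i u) \<partial>PiM T (\<lambda>_. lborel))"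
    by (simp add: pw)
  also have "\<dots> = (\<integral>u. FF T \<sigma> z R y u \<partial>distr (PiM T (\<lambda>_. lborel)) (PiM T (\<lambda>_. lborel)) (hu i))"
    by (rule integral_distr[symmetric, OF hu_measurable[OF i] m])
  also have "\<dots> = (\<integral>u. FF T \<sigma> z R y u \<partial>PiM T (\<lambda>_. lborel))"
    by (simp add: PiM_hu[OF i])
  finally show ?thesis by (simp add: nu_disc_FF)
qed



lemma basis_cart_ex: "b \<in> (Basis :: (real^'n::finite) set) \<Longrightarrow> \<exists>j. b = axis j 1"
  by (auto simp: Basis_vec_def)

lemma cbox_measure_lower:
  fixes l u :: "real^'n::finite"
  assumes "\<And>j. m \<le> u$j - l$j" "0 \<le> m"
  shows "m ^ CARD('n) \<le> measure lborel (cbox l u)"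
proof -
  have le: "\<forall>b\<in>Basis. l \<bullet> b \<le> u \<bullet> b"
  proof
    fix b :: "real^'n" assume "b \<in> Basis"
    then obtain j where "b = axis j 1" using basis_cart_ex by blast
    then show "l \<bullet> b \<le> u \<bullet> b" using assms(1)[of j] assms(2) by (simp add: inner_axis)
  qed
  have "(\<Prod>b\<in>(Basis::(real^'n) set). m) \<le> (\<Prod>b\<in>Basis. (u - l) \<bullet> b)"
  proof (rule prod_mono)
    fix b :: "real^'n" assume "b \<in> Basis"
    then obtain j where "b = axis j 1" using basis_cart_ex by blast
    then show "0 \<le> m \<and> m \<le> (u - l) \<bullet> b" using assms(1)[of j] assms(2) by (simp add: inner_axis)
  qed
  moreover have "(\<Prod>b\<in>(Basis::(real^'n) set). m) = m ^ CARD('n)" by simp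
  ultimately show ?thesis using le by (simp add: measure_lborel_cbox_eq)
qed

lemma cbox_measure_eq:
  fixes l u :: "real^'n::finite"
  assumes "\<And>j. u$j - l$j = m" "0 \<le> m"
  shows "measure lborel (cbox l u) = m ^ CARD('n)"
proof -
  have le: "\<forall>b\<in>Basis. l \<bullet> b \<le> u \<bullet> b"
  proof
    fix b :: "real^'n" assume "b \<in> Basis"
    then obtain j where "b = axis j 1" using basis_cart_ex by blast
    then show "l \<bullet> b \<le> u \<bullet> b" using assms(1)[of j] assms(2) by (simp add: inner_axis)
  qed
  have "(\<Prod>b\<in>Basis. (u - l) \<bullet> b) = (\<Prod>b\<in>(Basis::(real^'n) set). m)"
  proof (rule prod.cong[OF refl])
    fix b :: "real^'n" assume "b \<in> Basis"
    then obtain j where "b = axis j 1" using basis_cart_ex by blast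
    then show "(u - l) \<bullet> b = m" using assms(1)[of j] by (simp add: inner_axis)
  qed
  moreover have "(\<Prod>b\<in>(Basis::(real^'n) set). m) = m ^ CARD('n)" by simp
  ultimately show ?thesis using le by (simp add: measure_lborel_cbox_eq)
qed

lemma integrable_ball_nu:
  fixes T :: "'n::finite set" and h :: "real^'n \<Rightarrow> real"
  assumes s: "0 < \<sigma>" and V: "0 < V" and h: "h \<in> borel_measurable borel"
    and hb: "\<And>y. y \<in> ball c r \<Longrightarrow> \<bar>h y\<bar> \<le> H"
  shows "integrable lborel (\<lambda>y. indicator (ball c r) y * nu_disc T \<sigma> z R V y * h y)"
proof (rule Bochner_Integration.integrable_bound)
  define M where "M = Kc \<sigma> TYPE('n) * sqrt (2 * pi * \<sigma>^2) ^ card T / V"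
  show "integrable lborel (\<lambda>y. indicator (ball c r) y * (M * H))"
    by (intro integrable_mult_left integrable_real_indicator emeasure_bounded_finite) auto
  show "(\<lambda>y. indicator (ball c r) y * nu_disc T \<sigma> z R V y * h y) \<in> borel_measurable lborel"
    using h by (intro borel_measurable_times borel_measurable_indicator nu_measurable) auto
  show "AE y in lborel. norm (indicator (ball c r) y * nu_disc T \<sigma> z R V y * h y) \<le> norm (indicator (ball c r) y * (M * H))"
  proof (rule AE_I2)
    fix y
    show "norm (indicator (ball c r) y * nu_disc T \<sigma> z R V y * h y) \<le> norm (indicator (ball c r) y * (M * H))"
    proof (cases "y \<in> ball c r")
      case True
      have n0: "0 \<le> nu_disc T \<sigma> z R V y" by (rule nu_nonneg[OF s V])
      have n1: "nu_disc T \<sigma> z R V y \<le> M" unfolding M_def by (rule nu_upper[OF s V])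
      have h1: "\<bar>h y\<bar> \<le> H" by (rule hb[OF True])
      have "\<bar>nu_disc T \<sigma> z R V y * h y\<bar> \<le> M * H"
        unfolding abs_mult using n0 n1 h1 by (simp add: mult_mono)
      then show ?thesis using True by simp
    next
      case False then show ?thesis by simp
    qed
  qed
qed



lemma dist_rf:
  fixes z y :: "real^'n::finite"
  assumes "a = 2 * z $ i"
  shows "dist z (rf i a y) = dist z y"
proof -
  have "z - rf i a y = rf i 0 (z - y)" using assms by (auto simp: rf_def vec_eq_iff)
  then show ?thesis by (simp add: dist_norm norm_rf0)
qed

lemma rf_rf: "rf i a (rf i a y) = y"
  by (simp add: rf_def vec_eq_iff)

lemma nu_tilde_measurable[measurable]:
  fixes T :: "'n::finite set"
  shows "nu_tilde T \<sigma> z R V r0 \<in> borel_measurable borel"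
proof -
  have "(\<lambda>y. indicator (ball z r0) y * nu_disc T \<sigma> z R V y / (\<integral>w. indicator (ball z r0) w * nu_disc T \<sigma> z R V w \<partial>lborel)) \<in> borel_measurable borel"
    by (intro borel_measurable_divide borel_measurable_times borel_measurable_indicator nu_measurable borel_measurable_const) auto
  then show ?thesis unfolding nu_tilde_def[abs_def] .
qed

lemma mean_component:
  fixes T :: "'n::finite set"
  shows "mean_disc T \<sigma> z R V r0 $ i = 0 \<or> mean_disc T \<sigma> z R V r0 $ i = (\<integral>y. nu_tilde T \<sigma> z R V r0 y * y $ i \<partial>lborel)"
proof (cases "integrable lborel (\<lambda>y. nu_tilde T \<sigma> z R V r0 y *\<^sub>R y)")
  case True
  have "(\<integral>y. (nu_tilde T \<sigma> z R V r0 y *\<^sub>R y) $ i \<partial>lborel) = (\<integral>y. nu_tilde T \<sigma> z R V r0 y *\<^sub>R y \<partial>lborel) $ i"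
    by (rule integral_bounded_linear[OF bounded_linear_vec_nth True])
  then show ?thesis by (simp add: mean_disc_def)
next
  case False
  then show ?thesis by (simp add: mean_disc_def not_integrable_integral_eq)
qed

lemma mean_sym:
  fixes T :: "'n::finite set" and k i :: 'n
  assumes s: "0 < \<sigma>" and ik: "i \<noteq> k" and z: "z = \<Delta> *\<^sub>R axis k 1"
  shows "mean_disc T \<sigma> z R V r0 $ i = 0"
proof -
  have zi: "z $ i = 0" using ik by (simp add: z axis_def)
  define F where "F y = nu_tilde T \<sigma> z R V r0 y * y $ i" for y
  have nuinv: "nu_disc T \<sigma> z R V (rf i 0 y) = nu_disc T \<sigma> z R V y" for y
  proof (cases "i \<in> T")
    case True then show ?thesis by (rule nu_rf_in[OF _ zi s])
  next
    case False then show ?thesis by (simp add: nu_rf_notin)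
  qed
  have indinv: "indicator (ball z r0) (rf i 0 y) = (indicator (ball z r0) y :: real)" for y
    using dist_rf[of 0 z i y] zi by (simp add: indicator_def)
  have Finv: "F (rf i 0 y) = - F y" for y
    unfolding F_def nu_tilde_def by (simp add: nuinv indinv) (simp add: rf_def)
  have Fm: "F \<in> borel_measurable borel"
    unfolding F_def[abs_def] by (intro borel_measurable_times nu_tilde_measurable) simp
  have "(\<integral>y. F y \<partial>lborel) = (\<integral>y. F (rf i 0 y) \<partial>lborel)"
    by (rule lborel_rf_integral[symmetric, OF Fm])
  also have "\<dots> = - (\<integral>y. F y \<partial>lborel)" by (simp add: Finv)
  finally have "(\<integral>y. F y \<partial>lborel) = 0" by simp
  then show ?thesis using mean_component[of T \<sigma> z R V r0 i] by (auto simp: F_def)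
qed



lemma alg_final:
  fixes K V \<sigma> C D a L :: real and d n :: nat
  assumes "0 < K" "0 < V" "0 < \<sigma>" "0 < C" "0 < D" "0 < a"
  defines "sq \<equiv> C * \<sigma> / (2 * D)"
  shows "(K * exp (-L) * (2*\<sigma>)^d / V) * (a * sq^2 / (2*\<sigma>)) * (sq/2)^n / (2 * (K * (sqrt (2*pi) * \<sigma>)^d / V) * (2*(C*\<sigma>))^n)
    = (exp (-L) * 2^d * a * (C / (2 * D))^2 * (C / (4 * D))^n / (4 * sqrt (2*pi)^d * (2*C)^n)) * \<sigma>"
  using assms unfolding sq_def by (simp add: power_mult_distrib power_divide field_simps power2_eq_square)

definition c0 :: "real \<Rightarrow> real \<Rightarrow> real \<Rightarrow> real \<Rightarrow> nat \<Rightarrow> nat \<Rightarrow> real" where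
  "c0 a A C D d n = exp (- ((A + C + D)^2 / 2)) * 2^d * a * (C / (2 * D))^2 * (C / (4 * D))^n / (4 * sqrt (2*pi)^d * (2*C)^n)"

lemma c0_pos: "0 < a \<Longrightarrow> 0 < C \<Longrightarrow> 0 < D \<Longrightarrow> 0 < c0 a A C D d n"
  unfolding c0_def by (intro divide_pos_pos mult_pos_pos) auto

lemma vec_nth_measurable[measurable]: "(\<lambda>y::real^'n::finite. y $ k) \<in> borel_measurable borel"
  by (intro borel_measurable_continuous_onI continuous_on_component continuous_on_id)

lemma rf_integrable:
  fixes g :: "real^'n::finite \<Rightarrow> real"
  assumes "integrable lborel g" "g \<in> borel_measurable borel"
  shows "integrable lborel (\<lambda>y. g (rf i a y))"
proof -
  have "integrable (distr lborel borel (rf i a)) g" using assms(1) by (simp add: lborel_rf)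
  then show ?thesis by (subst (asm) integrable_distr_eq) (auto simp: assms(2))
qed



lemma mean_gap:
  fixes T :: "'n::finite set" and k :: 'n
  assumes kT: "k \<notin> T" and C: "0 < C" and a: "0 < a" and s: "0 < \<sigma>"
    and D1: "a * \<sigma> \<le> \<Delta>" and D2: "\<Delta> \<le> A * \<sigma>" and V: "0 < V"
    and z: "z = \<Delta> *\<^sub>R axis k 1" and r0: "r0 = C * \<sigma>" and Rb: "norm z + real CARD('n) * \<sigma> < R"
  shows "mean_disc T \<sigma> z R V r0 $ k = 0 \<or>
     c0 a A C (real CARD('n)) (card T) CARD('n) * \<sigma> \<le> \<Delta> - mean_disc T \<sigma> z R V r0 $ k"
proof -
  define D where "D = real CARD('n)"
  have Dpos: "0 < D" unfolding D_def by simp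
  define nu where "nu = nu_disc T \<sigma> z R V"
  define B where "B = ball z r0"
  define f where "f y = indicator B y * nu y" for y
  define Z where "Z = (\<integral>y. f y \<partial>lborel)"
  define E where "E y = exp (((y$k)^2 - (2*\<Delta> - y$k)^2) / (2*\<sigma>^2))" for y :: "real^'n"
  define nhi where "nhi = Kc \<sigma> TYPE('n) * sqrt (2*pi*\<sigma>^2) ^ card T / V"
  define nlo where "nlo = Kc \<sigma> TYPE('n) * exp (- (((A+C)*\<sigma> + D*\<sigma>)^2) / (2*\<sigma>^2)) * (2*\<sigma>) ^ card T / V"
  define sq where "sq = C*\<sigma>/(2*D)"
  define l :: "real^'n" where "l = (\<chi> j. if j = k then \<Delta> + sq/2 else - sq)"
  define u :: "real^'n" where "u = (\<chi> j. if j = k then \<Delta> + sq else sq)"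
  define Q where "Q = cbox l u"
  have Dpos': "0 < \<Delta>" using a s D1 by (smt (verit) mult_pos_pos)
  have r0pos: "0 < r0" using C s r0 by simp
  have sqpos: "0 < sq" using C s Dpos by (simp add: sq_def)
  have zk: "z $ k = \<Delta>" by (simp add: z)
  have zj: "j \<noteq> k \<Longrightarrow> z $ j = 0" for j by (simp add: z axis_def)
  have nz: "norm z = \<Delta>" using Dpos' by (simp add: z)
  have Kpos: "0 < Kc \<sigma> TYPE('n)" by (rule Kc_pos[OF s])
  have nlopos: "0 < nlo" unfolding nlo_def using Kpos V s by (intro divide_pos_pos mult_pos_pos) auto
  have nu0: "0 \<le> nu y" for y unfolding nu_def by (rule nu_nonneg[OF s V])
  have nuhi: "nu y \<le> nhi" for y unfolding nu_def nhi_def by (rule nu_upper[OF s V])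
  have nulo: "nlo \<le> nu y" if "norm y \<le> (A+C)*\<sigma>" for y
    unfolding nu_def nlo_def D_def using nu_lower[OF s V that Rb, of T] by simp
  have tB: "\<bar>y$k - \<Delta>\<bar> < r0" if "y \<in> B" for y
  proof -
    have "norm (y - z) < r0" using that by (simp add: B_def dist_norm norm_minus_commute)
    moreover have "\<bar>(y - z)$k\<bar> \<le> norm (y - z)" by (rule component_le_norm_cart)
    ultimately show ?thesis by (simp add: zk)
  qed
  have Qprop: "y \<in> B \<and> norm y \<le> (A+C)*\<sigma> \<and> sq/2 \<le> y$k - \<Delta>" if yQ: "y \<in> Q" for y
  proof -
    have yl: "l$j \<le> y$j" and yu: "y$j \<le> u$j" for j using yQ unfolding Q_def mem_box_cart by auto
    have c: "\<bar>(y - z)$j\<bar> \<le> sq" for j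
    proof (cases "j = k")
      case True then show ?thesis using yl[of j] yu[of j] sqpos zk by (simp add: l_def u_def abs_le_iff)
    next
      case False then show ?thesis using yl[of j] yu[of j] sqpos zj[OF False] by (simp add: l_def u_def abs_le_iff)
    qed
    have "norm (y - z) \<le> (\<Sum>j\<in>UNIV. \<bar>(y - z)$j\<bar>)" by (rule norm_le_l1_cart)
    also have "\<dots> \<le> (\<Sum>j\<in>(UNIV::'n set). sq)" by (intro sum_mono c)
    also have "\<dots> = D * sq" by (simp add: D_def)
    also have "\<dots> = C*\<sigma>/2" using Dpos by (simp add: sq_def)
    finally have nyz: "norm (y - z) \<le> C*\<sigma>/2" .
    have Cs: "0 < C*\<sigma>" using C s by simp
    then have "norm (y - z) < r0" using nyz r0 by linarith
    then have inB: "y \<in> B" by (simp add: B_def dist_norm norm_minus_commute)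
    have "norm y \<le> norm z + norm (y - z)" using norm_triangle_ineq[of z "y - z"] by simp
    moreover have "(A+C)*\<sigma> = A*\<sigma> + C*\<sigma>" by (simp add: distrib_right)
    ultimately have "norm y \<le> (A+C)*\<sigma>" using nyz nz D2 Cs by linarith
    moreover have "sq/2 \<le> y$k - \<Delta>" using yl[of k] by (simp add: l_def)
    ultimately show ?thesis using inB by simp
  qed
  have fm: "f \<in> borel_measurable borel"
    unfolding f_def[abs_def] nu_def by (intro borel_measurable_times borel_measurable_indicator nu_measurable) (auto simp: B_def)
  have fd: "f = (\<lambda>y. indicator (ball z r0) y * nu_disc T \<sigma> z R V y)"
    by (simp add: fun_eq_iff f_def B_def nu_def)
  have int1: "integrable lborel f"
    using integrable_ball_nu[OF s V, where h="\<lambda>_. 1" and H=1 and c=z and r=r0 and T=T and z=z and R=R]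
    by (simp add: fd)
  define G where "G y = f y * (y$k - \<Delta>)" for y
  have intG: "integrable lborel G"
    using integrable_ball_nu[OF s V, where h="\<lambda>y. y$k - \<Delta>" and H=r0 and c=z and r=r0 and T=T and z=z and R=R] tB
    by (simp add: G_def[abs_def] fd B_def less_imp_le)
  have Gm: "G \<in> borel_measurable borel" unfolding G_def[abs_def] using fm by simp
  have indt: "indicator B (rf k (2*\<Delta>) y) = (indicator B y :: real)" for y
    using dist_rf[of "2*\<Delta>" z k y] zk by (simp add: B_def indicator_def)
  have nut: "nu (rf k (2*\<Delta>) y) = nu y * E y" for y
    unfolding nu_def E_def by (rule nu_rf_notin[OF kT])
  have Gt: "G (rf k (2*\<Delta>) y) = - (f y * E y * (y$k - \<Delta>))" for y
    unfolding G_def f_def by (simp add: indt nut) (simp add: rf_def algebra_simps)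
  have intFE: "integrable lborel (\<lambda>y. f y * E y * (y$k - \<Delta>))"
    using rf_integrable[OF intG Gm, of k "2*\<Delta>"] by (simp add: Gt)
  define I where "I = (\<integral>y. G y \<partial>lborel)"
  have I1: "I = - (\<integral>y. f y * E y * (y$k - \<Delta>) \<partial>lborel)"
  proof -
    have "I = (\<integral>y. G (rf k (2*\<Delta>) y) \<partial>lborel)" unfolding I_def by (rule lborel_rf_integral[symmetric, OF Gm])
    then show ?thesis by (simp add: Gt)
  qed
  define J where "J = (\<integral>y. f y * (y$k - \<Delta>) * (E y - 1) \<partial>lborel)"
  have Jeq: "f y * (y$k - \<Delta>) * (E y - 1) = f y * E y * (y$k - \<Delta>) - G y" for y
    by (simp add: G_def algebra_simps)
  have intJ: "integrable lborel (\<lambda>y. f y * (y$k - \<Delta>) * (E y - 1))"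
    unfolding Jeq using intFE intG by (rule Bochner_Integration.integrable_diff)
  have JI: "J = - 2 * I"
  proof -
    have "J = (\<integral>y. f y * E y * (y$k - \<Delta>) \<partial>lborel) - I"
      unfolding J_def Jeq I_def using intFE intG by (rule Bochner_Integration.integral_diff)
    then show ?thesis using I1 by simp
  qed
  have Xeq: "((y$k)^2 - (2*\<Delta> - y$k)^2) / (2*\<sigma>^2) = 2 * \<Delta> * (y$k - \<Delta>) / \<sigma>^2" for y :: "real^'n"
    using s by (simp add: field_simps power2_eq_square)
  have tE0: "0 \<le> (y$k - \<Delta>) * (E y - 1)" for y
  proof (cases "0 \<le> y$k - \<Delta>")
    case True
    have "0 \<le> 2 * \<Delta> * (y$k - \<Delta>) / \<sigma>^2" using True Dpos' by simp
    then have "1 \<le> E y" unfolding E_def Xeq by simp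
    then show ?thesis using True by simp
  next
    case False
    have "2 * \<Delta> * (y$k - \<Delta>) / \<sigma>^2 \<le> 0" using False Dpos' s
      by (intro divide_nonpos_pos) (auto simp: mult_nonneg_nonpos)
    then have "E y \<le> 1" unfolding E_def Xeq by simp
    then show ?thesis using False by (simp add: mult_nonpos_nonpos)
  qed
  define cst where "cst = nlo * (a * sq^2 / (2*\<sigma>))"
  have cst0: "0 \<le> cst" unfolding cst_def using nlopos a s by simp
  have pw: "indicator Q y * cst \<le> f y * (y$k - \<Delta>) * (E y - 1)" for y
  proof (cases "y \<in> Q")
    case True
    note q = Qprop[OF True]
    define t where "t = y$k - \<Delta>"
    have t1: "sq/2 \<le> t" using q by (simp add: t_def)
    have E1: "2 * \<Delta> * t / \<sigma>^2 \<le> E y - 1"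
      using exp_ge_add_one_self[of "2 * \<Delta> * t / \<sigma>^2"] unfolding E_def Xeq t_def by linarith
    have "a * sq^2 / (2*\<sigma>) = 2 * (a*\<sigma>) * (sq/2)^2 / \<sigma>^2"
      using s by (simp add: field_simps power2_eq_square)
    also have "\<dots> \<le> 2 * \<Delta> * t^2 / \<sigma>^2"
      using D1 t1 sqpos a s Dpos'
      by (intro divide_right_mono mult_mono mult_left_mono power_mono) auto
    also have "\<dots> = t * (2 * \<Delta> * t / \<sigma>^2)" by (simp add: power2_eq_square)
    also have "\<dots> \<le> t * (E y - 1)" using E1 t1 sqpos by (intro mult_left_mono) auto
    finally have te: "a * sq^2 / (2*\<sigma>) \<le> t * (E y - 1)" .
    have "cst \<le> nu y * (t * (E y - 1))"
      unfolding cst_def using nulo[of y] q te nlopos a s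
      by (intro mult_mono) auto
    then show ?thesis using True q by (simp add: f_def t_def mult.assoc)
  next
    case False
    have "0 \<le> f y" using nu0[of y] by (simp add: f_def)
    then have "0 \<le> f y * ((y$k - \<Delta>) * (E y - 1))" using tE0[of y] by simp
    then show ?thesis using False by (simp add: mult.assoc)
  qed
  have Qm: "Q \<in> sets lborel" by (simp add: Q_def)
  have Qf: "emeasure lborel Q < \<infinity>" unfolding Q_def by (intro emeasure_bounded_finite bounded_cbox)
  have mQ: "(sq/2) ^ CARD('n) \<le> measure lborel Q"
    unfolding Q_def using sqpos by (intro cbox_measure_lower) (auto simp: l_def u_def)
  have J1: "cst * measure lborel Q \<le> J"
  proof -
    have "(\<integral>y. indicator Q y * cst \<partial>lborel) \<le> J"
      unfolding J_def using Qm Qf intJ pw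
      by (intro integral_mono integrable_mult_left integrable_real_indicator) auto
    then show ?thesis using Qm by (simp add: mult.commute)
  qed
  have J2: "cst * (sq/2) ^ CARD('n) \<le> J"
    using J1 mQ cst0 by (meson mult_left_mono order_trans)
  have Z1: "nlo * measure lborel Q \<le> Z"
  proof -
    have "(\<integral>y. indicator Q y * nlo \<partial>lborel) \<le> Z"
      unfolding Z_def using Qm Qf int1 Qprop nulo nu0
      by (intro integral_mono integrable_mult_left integrable_real_indicator)
         (auto simp: f_def indicator_def)
    then show ?thesis using Qm by (simp add: mult.commute)
  qed
  have Zpos: "0 < Z"
  proof -
    have "0 < (sq/2) ^ CARD('n)" using sqpos by simp
    then have "0 < measure lborel Q" using mQ by linarith
    then show ?thesis using Z1 nlopos by (smt (verit) mult_pos_pos)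
  qed
  define lb :: "real^'n" where "lb = (\<chi> j. z$j - r0)"
  define ub :: "real^'n" where "ub = (\<chi> j. z$j + r0)"
  have Z2: "Z \<le> nhi * (2*r0) ^ CARD('n)"
  proof -
    have sub: "y \<in> cbox lb ub" if "y \<in> B" for y
    proof -
      have "norm (y - z) < r0" using that by (simp add: B_def dist_norm norm_minus_commute)
      then have c: "\<bar>(y - z)$j\<bar> < r0" for j using component_le_norm_cart[of "y - z" j] by linarith
      have "z$j - r0 \<le> y$j \<and> y$j \<le> z$j + r0" for j using c[of j] by (simp add: abs_less_iff)
      then show ?thesis by (simp add: mem_box_cart lb_def ub_def)
    qed
    have bm: "cbox lb ub \<in> sets lborel" by simp
    have bf: "emeasure lborel (cbox lb ub) < \<infinity>" by (intro emeasure_bounded_finite bounded_cbox)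
    have "Z \<le> (\<integral>y. indicator (cbox lb ub) y * nhi \<partial>lborel)"
      unfolding Z_def using bm bf int1 sub nuhi nu0 order_trans[OF nu0 nuhi]
      by (intro integral_mono integrable_mult_left integrable_real_indicator)
         (auto simp: f_def indicator_def)
    also have "\<dots> = nhi * measure lborel (cbox lb ub)" using bm by (simp add: mult.commute)
    also have "measure lborel (cbox lb ub) = (2*r0) ^ CARD('n)"
      using r0pos by (intro cbox_measure_eq) (auto simp: lb_def ub_def)
    finally show ?thesis .
  qed
  have nt: "nu_tilde T \<sigma> z R V r0 y = f y / Z" for y
    by (simp add: nu_tilde_def f_def Z_def B_def nu_def)
  consider "mean_disc T \<sigma> z R V r0 $ k = 0" | "mean_disc T \<sigma> z R V r0 $ k = (\<integral>y. nu_tilde T \<sigma> z R V r0 y * y $ k \<partial>lborel)"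
    using mean_component by blast
  then show ?thesis
  proof cases
    case 1 then show ?thesis by simp
  next
    case 2
    have fyk: "(\<lambda>y. f y * y$k) = (\<lambda>y. G y + \<Delta> * f y)" by (auto simp: G_def algebra_simps)
    have "(\<integral>y. f y * y$k \<partial>lborel) = I + \<Delta> * Z"
      unfolding fyk I_def Z_def using intG int1
      by (simp add: Bochner_Integration.integral_add)
    then have "mean_disc T \<sigma> z R V r0 $ k = (I + \<Delta> * Z) / Z"
      using 2 by (simp add: nt)
    then have "\<Delta> - mean_disc T \<sigma> z R V r0 $ k = J / (2 * Z)"
      using Zpos JI by (simp add: field_simps)
    moreover have "cst * (sq/2) ^ CARD('n) / (2 * (nhi * (2*r0) ^ CARD('n))) \<le> J / (2 * Z)"
    proof -
      have "0 \<le> cst * (sq/2)^CARD('n)" using cst0 sqpos by simp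
      then have "0 \<le> J" using J2 by linarith
      then show ?thesis using J2 Z2 Zpos by (intro frac_le) auto
    qed
    moreover have "cst * (sq/2) ^ CARD('n) / (2 * (nhi * (2*r0) ^ CARD('n))) = c0 a A C D (card T) CARD('n) * \<sigma>"
    proof -
      have e1: "exp (- (((A+C)*\<sigma> + D*\<sigma>)^2) / (2*\<sigma>^2)) = exp (- ((A + C + D)^2 / 2))"
        using s by (simp add: field_simps power2_eq_square)
      have e2: "sqrt (2*pi*\<sigma>^2) = sqrt (2*pi) * \<sigma>"
        using s by (simp add: real_sqrt_mult)
      show ?thesis
        unfolding cst_def nlo_def nhi_def e1 e2 r0 c0_def sq_def
        using alg_final[OF Kpos V s C Dpos a, of "(A + C + D)^2 / 2" "card T" "CARD('n)"]
        by simp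
    qed
    ultimately show ?thesis by (simp add: D_def)
  qed
qed



lemma R_big:
  fixes A D C \<sigma> :: real
  assumes AD: "0 < A + D" and C: "C > 1" and s: "0 < \<sigma>" and s0: "\<sigma> < exp (- ((A + D)^2))"
  shows "(A + D) * \<sigma> < C * \<sigma> + C * \<sigma> * sqrt (ln (1 / \<sigma>))"
proof -
  have "ln \<sigma> < ln (exp (- ((A + D)^2)))"
    using ln_less_cancel_iff[of \<sigma> "exp (- ((A + D)^2))"] s s0 by (simp del: ln_exp)
  then have "(A + D)^2 < ln (1 / \<sigma>)" using s by (simp add: ln_div)
  then have "sqrt ((A + D)^2) < sqrt (ln (1 / \<sigma>))" by (rule real_sqrt_less_mono)
  then have l: "A + D < sqrt (ln (1 / \<sigma>))" using AD by simp
  have q0: "0 \<le> sqrt (ln (1 / \<sigma>))" using l AD by linarith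
  have "1 * sqrt (ln (1 / \<sigma>)) \<le> C * sqrt (ln (1 / \<sigma>))" using C q0 by (intro mult_right_mono) auto
  then have "sqrt (ln (1 / \<sigma>)) \<le> C * sqrt (ln (1 / \<sigma>))" by simp
  with l have "A + D < C * sqrt (ln (1 / \<sigma>))" by linarith
  then have "(A + D) * \<sigma> < C * sqrt (ln (1 / \<sigma>)) * \<sigma>" using s by simp
  moreover have "0 < C * \<sigma>" using C s by simp
  ultimately show ?thesis by (simp add: algebra_simps)
qed

theorem lemma3p4:
  fixes T :: "'n::finite set" and k :: 'n and C a A :: real
  assumes "k \<notin> T" and "C > 1" and "0 < a" and "a \<le> A"
  shows "\<exists>c \<sigma>0. 0 < c \<and> c < 1 \<and> 0 < \<sigma>0 \<and>
    (\<forall>\<sigma> \<Delta> V. 0 < \<sigma> \<and> \<sigma> < \<sigma>0 \<and> a * \<sigma> \<le> \<Delta> \<and> \<Delta> \<le> A * \<sigma> \<and> 0 < V \<longrightarrow>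
      (let z = \<Delta> *\<^sub>R axis k 1;
           r0 = C * \<sigma>;
           R = r0 + C * \<sigma> * sqrt (ln (1 / \<sigma>));
           \<mu> = mean_disc T \<sigma> z R V r0
       in \<bar>\<Delta> - \<mu> $ k\<bar> \<ge> c * \<sigma> \<and> (\<forall>i. i \<noteq> k \<longrightarrow> \<mu> $ i = 0)))"
proof -
  note kT = assms(1) and C1 = assms(2) and a = assms(3) and aA = assms(4)
  define D where "D = real CARD('n)"
  have Dpos: "0 < D" unfolding D_def by simp
  have Cpos: "0 < C" using C1 by simp
  define c where "c = min (min (c0 a A C D (card T) CARD('n)) a) (1/2)"
  define s0 where "s0 = min (1/2) (exp (- ((A + D)^2)))"
  have cpos: "0 < c" unfolding c_def using c0_pos[OF a Cpos Dpos] a by simp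
  have c1: "c < 1" unfolding c_def by simp
  have s0pos: "0 < s0" unfolding s0_def by simp
  have main: "\<bar>\<Delta> - mean_disc T \<sigma> (\<Delta> *\<^sub>R axis k 1) (C * \<sigma> + C * \<sigma> * sqrt (ln (1 / \<sigma>))) V (C * \<sigma>) $ k\<bar> \<ge> c * \<sigma>
      \<and> (\<forall>i. i \<noteq> k \<longrightarrow> mean_disc T \<sigma> (\<Delta> *\<^sub>R axis k 1) (C * \<sigma> + C * \<sigma> * sqrt (ln (1 / \<sigma>))) V (C * \<sigma>) $ i = 0)"
    if s: "0 < \<sigma>" and ss0: "\<sigma> < s0" and D1: "a * \<sigma> \<le> \<Delta>" and D2: "\<Delta> \<le> A * \<sigma>" and V: "0 < V" for \<sigma> \<Delta> V
  proof -
    define z where "z = \<Delta> *\<^sub>R (axis k 1 :: real^'n)"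
    define R where "R = C * \<sigma> + C * \<sigma> * sqrt (ln (1 / \<sigma>))"
    have Dpos': "0 < \<Delta>" using a s D1 by (smt (verit) mult_pos_pos)
    have nz: "norm z = \<Delta>" using Dpos' by (simp add: z_def)
    have AD: "0 < A + D" using a aA Dpos by simp
    have "\<sigma> < exp (- ((A + D)^2))" using ss0 by (simp add: s0_def)
    from R_big[OF AD C1 s this] have "(A + D) * \<sigma> < R" by (simp add: R_def)
    then have Rb: "norm z + real CARD('n) * \<sigma> < R" using nz D2 by (simp add: D_def algebra_simps)
    have sym: "\<forall>i. i \<noteq> k \<longrightarrow> mean_disc T \<sigma> z R V (C * \<sigma>) $ i = 0"
      using mean_sym[OF s _ z_def] by blast
    have gap: "mean_disc T \<sigma> z R V (C * \<sigma>) $ k = 0 \<or>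
        c0 a A C (real CARD('n)) (card T) CARD('n) * \<sigma> \<le> \<Delta> - mean_disc T \<sigma> z R V (C * \<sigma>) $ k"
      by (rule mean_gap[OF kT Cpos a s D1 D2 V z_def refl Rb])
    have cle1: "c * \<sigma> \<le> c0 a A C D (card T) CARD('n) * \<sigma>" unfolding c_def using s by simp
    have cle2: "c * \<sigma> \<le> a * \<sigma>" unfolding c_def using s by simp
    have "c * \<sigma> \<le> \<bar>\<Delta> - mean_disc T \<sigma> z R V (C * \<sigma>) $ k\<bar>"
      using gap
    proof
      assume "mean_disc T \<sigma> z R V (C * \<sigma>) $ k = 0"
      then show ?thesis using cle2 D1 Dpos' by simp
    next
      assume "c0 a A C (real CARD('n)) (card T) CARD('n) * \<sigma> \<le> \<Delta> - mean_disc T \<sigma> z R V (C * \<sigma>) $ k"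
      then show ?thesis using cle1 unfolding D_def by linarith
    qed
    then show ?thesis using sym by (simp add: z_def R_def)
  qed
  show ?thesis
    apply (rule exI[of _ c], rule exI[of _ s0])
    using cpos c1 s0pos main by (simp add: Let_def)
qed

end
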